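(* Let $(V,\langle\cdot\,,\cdot\rangle_V)$ be a nonzero neutral scalar product space, let $P$ be an isometric involution of $V$, and assume there are two anti-isometries $T_1,T_2\colon V\to V$ such that $T_1P=-PT_1$ and $T_2P=PT_2$. Then the eigenspaces $E_+=\{v:Pv=v\}$ and $E_-=\{v:Pv=-v\}$ of $P$ are non-trivial, and the restriction of $\langle\cdot\,,\cdot\rangle_V$ to each of $E_\pm$ is non-degenerate and neutral.
   Context: A scalar product is a real symmetric non-degenerate bilinear form on a finite-dimensional real vector space; it is neutral if the maximal dimensions of subspaces on which it is positive definite, respectively negative definite, coincide. An involution is a linear $P$ with $P^2=\mathrm{Id}_V$. A bijective linear map $T$ is an isometry if $\langle Tv,Tv\rangle_V=\langle v,v\rangle_V$ for all $v$, and an anti-isometry if $\langle Tv,Tv\rangle_V=-\langle v,v\rangle_V$ for all $v$. *)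

theory Defs
  imports "HOL-Analysis.Analysis"
begin

definition nondegenerate_on :: "('v::real_vector \<Rightarrow> 'v \<Rightarrow> real) \<Rightarrow> 'v set \<Rightarrow> bool" where
  "nondegenerate_on B W \<longleftrightarrow> (\<forall>w\<in>W. (\<forall>u\<in>W. B w u = 0) \<longrightarrow> w = 0)"

definition scalar_product :: "('v::real_vector \<Rightarrow> 'v \<Rightarrow> real) \<Rightarrow> bool" where
  "scalar_product B \<longleftrightarrow> bilinear B \<and> (\<forall>u v. B u v = B v u) \<and> nondegenerate_on B UNIV"

definition pos_definite_on :: "('v::real_vector \<Rightarrow> 'v \<Rightarrow> real) \<Rightarrow> 'v set \<Rightarrow> bool" where
  "pos_definite_on B U \<longleftrightarrow> (\<forall>u\<in>U. u \<noteq> 0 \<longrightarrow> B u u > 0)"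

definition neg_definite_on :: "('v::real_vector \<Rightarrow> 'v \<Rightarrow> real) \<Rightarrow> 'v set \<Rightarrow> bool" where
  "neg_definite_on B U \<longleftrightarrow> (\<forall>u\<in>U. u \<noteq> 0 \<longrightarrow> B u u < 0)"

definition max_pos_dim :: "('v::euclidean_space \<Rightarrow> 'v \<Rightarrow> real) \<Rightarrow> 'v set \<Rightarrow> nat" where
  "max_pos_dim B W = Max {dim U | U. subspace U \<and> U \<subseteq> W \<and> pos_definite_on B U}"

definition max_neg_dim :: "('v::euclidean_space \<Rightarrow> 'v \<Rightarrow> real) \<Rightarrow> 'v set \<Rightarrow> nat" where
  "max_neg_dim B W = Max {dim U | U. subspace U \<and> U \<subseteq> W \<and> neg_definite_on B U}"

definition neutral_on :: "('v::euclidean_space \<Rightarrow> 'v \<Rightarrow> real) \<Rightarrow> 'v set \<Rightarrow> bool" where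
  "neutral_on B W \<longleftrightarrow> max_pos_dim B W = max_neg_dim B W"

definition isometry :: "('v::real_vector \<Rightarrow> 'v \<Rightarrow> real) \<Rightarrow> ('v \<Rightarrow> 'v) \<Rightarrow> bool" where
  "isometry B T \<longleftrightarrow> linear T \<and> bij T \<and> (\<forall>v. B (T v) (T v) = B v v)"

definition anti_isometry :: "('v::real_vector \<Rightarrow> 'v \<Rightarrow> real) \<Rightarrow> ('v \<Rightarrow> 'v) \<Rightarrow> bool" where
  "anti_isometry B T \<longleftrightarrow> linear T \<and> bij T \<and> (\<forall>v. B (T v) (T v) = - B v v)"

definition involution :: "('v::real_vector \<Rightarrow> 'v) \<Rightarrow> bool" where
  "involution P \<longleftrightarrow> linear P \<and> (\<forall>v. P (P v) = v)"

end

theory Submission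
  imports Defs
begin

lemma dim_img:
  fixes T :: "'v::euclidean_space \<Rightarrow> 'v"
  assumes "linear T" "inj T"
  shows "dim (T ` U) = dim U"
  using dim_image_eq[OF assms(1)] assms(2) by (meson inj_on_subset subset_UNIV)

lemma neutral_transfer:
  fixes B :: "'v::euclidean_space \<Rightarrow> 'v \<Rightarrow> real" and T :: "'v \<Rightarrow> 'v"
  assumes lin: "linear T" and inj: "inj T" and anti: "\<forall>v. B (T v) (T v) = - B v v"
    and inv: "\<forall>w\<in>W. T w \<in> W"
  shows "neutral_on B W"
proof -
  have T0: "T 0 = 0" using lin by (simp add: linear_0)
  have "{dim U | U. subspace U \<and> U \<subseteq> W \<and> pos_definite_on B U}
      = {dim U | U. subspace U \<and> U \<subseteq> W \<and> neg_definite_on B U}" (is "?A = ?B")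
  proof
    show "?A \<subseteq> ?B"
    proof
      fix d assume "d \<in> ?A"
      then obtain U where U: "d = dim U" "subspace U" "U \<subseteq> W" "pos_definite_on B U" by blast
      have "subspace (T ` U)" using U(2) lin by (simp add: linear_subspace_image)
      moreover have "T ` U \<subseteq> W" using U(3) inv by auto
      moreover have "neg_definite_on B (T ` U)"
        using U(4) anti T0 unfolding pos_definite_on_def neg_definite_on_def by force
      moreover have "dim (T ` U) = d" using dim_img[OF lin inj] U(1) by simp
      ultimately show "d \<in> ?B" by blast
    qed
  next
    show "?B \<subseteq> ?A"
    proof
      fix d assume "d \<in> ?B"
      then obtain U where U: "d = dim U" "subspace U" "U \<subseteq> W" "neg_definite_on B U" by blast
      have "subspace (T ` U)" using U(2) lin by (simp add: linear_subspace_image)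
      moreover have "T ` U \<subseteq> W" using U(3) inv by auto
      moreover have "pos_definite_on B (T ` U)"
        using U(4) anti T0 unfolding pos_definite_on_def neg_definite_on_def by force
      moreover have "dim (T ` U) = d" using dim_img[OF lin inj] U(1) by simp
      ultimately show "d \<in> ?A" by blast
    qed
  qed
  then show ?thesis unfolding neutral_on_def max_pos_dim_def max_neg_dim_def by simp
qed

theorem lemma2p14:
  fixes B :: "'v::euclidean_space \<Rightarrow> 'v \<Rightarrow> real"
    and P T1 T2 :: "'v \<Rightarrow> 'v"
  assumes "scalar_product B"
    and "neutral_on B UNIV"
    and "(UNIV :: 'v set) \<noteq> {0}"
    and "involution P" and "isometry B P"
    and "anti_isometry B T1" and "anti_isometry B T2"
    and "\<forall>v. T1 (P v) = - P (T1 v)"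
    and "\<forall>v. T2 (P v) = P (T2 v)"
  shows "{v. P v = v} \<noteq> {0} \<and> {v. P v = - v} \<noteq> {0}
     \<and> nondegenerate_on B {v. P v = v} \<and> neutral_on B {v. P v = v}
     \<and> nondegenerate_on B {v. P v = - v} \<and> neutral_on B {v. P v = - v}"
proof -
  have bil: "bilinear B" and sym: "\<And>u v. B u v = B v u" and nd: "nondegenerate_on B UNIV"
    using assms(1) unfolding scalar_product_def by auto
  have linP: "linear P" and PP: "\<And>v. P (P v) = v" using assms(4) unfolding involution_def by auto
  have isoP: "\<And>v. B (P v) (P v) = B v v" using assms(5) unfolding isometry_def by auto
  have lin1: "linear T1" and inj1: "inj T1" using assms(6) unfolding anti_isometry_def bij_def by auto
  have lin2: "linear T2" and inj2: "inj T2" and anti2: "\<forall>v. B (T2 v) (T2 v) = - B v v"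
    using assms(7) unfolding anti_isometry_def bij_def by auto
  have decomp: "\<And>v. v = (1/2) *\<^sub>R (v + P v) + (1/2) *\<^sub>R (v - P v)"
  proof -
    fix v :: 'v
    have "(1/2) *\<^sub>R (v + P v) + (1/2) *\<^sub>R (v - P v) = (1/2) *\<^sub>R ((v + P v) + (v - P v))"
      by (simp only: scaleR_add_right)
    also have "\<dots> = (1/2) *\<^sub>R (2 *\<^sub>R v)" by (simp add: scaleR_2)
    finally show "v = (1/2) *\<^sub>R (v + P v) + (1/2) *\<^sub>R (v - P v)" by simp
  qed
  have plus: "\<And>v. P ((1/2) *\<^sub>R (v + P v)) = (1/2) *\<^sub>R (v + P v)"
    using linP PP by (simp add: linear_add linear_scale add.commute)
  have minus: "\<And>v. P ((1/2) *\<^sub>R (v - P v)) = - ((1/2) *\<^sub>R (v - P v))"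
    using linP PP by (simp add: linear_diff linear_scale algebra_simps)
  have orth: "B u w = 0" if "P u = u" "P w = - w" for u w
  proof -
    have "B (P (u + w)) (P (u + w)) = B (u + w) (u + w)" by (rule isoP)
    moreover have "P (u + w) = u - w" using that linP by (simp add: linear_add)
    ultimately have "B (u - w) (u - w) = B (u + w) (u + w)" by simp
    then show ?thesis
      using bil sym[of w u]
      by (simp add: bilinear_ladd bilinear_radd bilinear_lsub bilinear_rsub algebra_simps)
  qed
  have nd1: "nondegenerate_on B {v. P v = v}"
    unfolding nondegenerate_on_def
  proof (intro ballI impI)
    fix w assume w: "w \<in> {v. P v = v}" and h: "\<forall>u\<in>{v. P v = v}. B w u = 0"
    have "\<forall>v. B w v = 0"
    proof
      fix v
      have "B w v = B w ((1/2) *\<^sub>R (v + P v)) + B w ((1/2) *\<^sub>R (v - P v))"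
        using bil decomp[of v] by (metis bilinear_radd)
      also have "\<dots> = 0" using h plus[of v] orth[OF _ minus[of v], of w] w by simp
      finally show "B w v = 0" .
    qed
    then show "w = 0" using nd unfolding nondegenerate_on_def by simp
  qed
  have nd2: "nondegenerate_on B {v. P v = - v}"
    unfolding nondegenerate_on_def
  proof (intro ballI impI)
    fix w assume w: "w \<in> {v. P v = - v}" and h: "\<forall>u\<in>{v. P v = - v}. B w u = 0"
    have "\<forall>v. B w v = 0"
    proof
      fix v
      have "B w v = B w ((1/2) *\<^sub>R (v + P v)) + B w ((1/2) *\<^sub>R (v - P v))"
        using bil decomp[of v] by (metis bilinear_radd)
      also have "\<dots> = 0"
      proof -
        have "B w ((1/2) *\<^sub>R (v - P v)) = 0" using h minus[of v] by blast
        moreover have "B ((1/2) *\<^sub>R (v + P v)) w = 0" using orth[OF plus[of v], of w] w by simp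
        ultimately show ?thesis using sym by simp
      qed
      finally show "B w v = 0" .
    qed
    then show "w = 0" using nd unfolding nondegenerate_on_def by simp
  qed
  have inv1: "\<forall>w\<in>{v. P v = v}. T2 w \<in> {v. P v = v}"
  proof
    fix w assume "w \<in> {v. P v = v}"
    then have "P w = w" by simp
    moreover have "T2 (P w) = P (T2 w)" using assms(9) by blast
    ultimately have "P (T2 w) = T2 w" by simp
    then show "T2 w \<in> {v. P v = v}" by simp
  qed
  have inv2: "\<forall>w\<in>{v. P v = - v}. T2 w \<in> {v. P v = - v}"
  proof
    fix w assume "w \<in> {v. P v = - v}"
    then have "P w = - w" by simp
    moreover have "T2 (P w) = P (T2 w)" using assms(9) by blast
    ultimately have "P (T2 w) = T2 (- w)" by simp
    also have "\<dots> = - T2 w" by (rule linear_neg[OF lin2])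
    finally show "T2 w \<in> {v. P v = - v}" by simp
  qed
  have neu1: "neutral_on B {v. P v = v}"
    by (rule neutral_transfer[where B=B, OF lin2 inj2 anti2 inv1])
  have neu2: "neutral_on B {v. P v = - v}"
    by (rule neutral_transfer[where B=B, OF lin2 inj2 anti2 inv2])
  obtain x :: 'v where x: "x \<noteq> 0" using assms(3) by auto
  have T10: "\<And>v. T1 v = 0 \<Longrightarrow> v = 0" using inj1 lin1 by (metis injD linear_0)
  have ne1: "{v. P v = v} \<noteq> {0}"
  proof
    assume E: "{v. P v = v} = {0}"
    have allm: "\<And>v. P v = - v"
    proof -
      fix v
      have "(1/2) *\<^sub>R (v + P v) = 0" using plus[of v] E by blast
      then have "v + P v = 0" by simp
      then show "P v = - v" by (metis add.commute eq_neg_iff_add_eq_0)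
    qed
    have "T1 (P x) = - P (T1 x)" using assms(8) by blast
    then have "P (T1 x) = - T1 (P x)" by simp
    also have "\<dots> = - T1 (- x)" using allm by simp
    also have "\<dots> = T1 x" by (simp add: linear_neg[OF lin1])
    finally have "P (T1 x) = T1 x" .
    then have "T1 x = 0" using E by blast
    then show False using T10 x by blast
  qed
  have ne2: "{v. P v = - v} \<noteq> {0}"
  proof
    assume E: "{v. P v = - v} = {0}"
    have allp: "\<And>v. P v = v"
    proof -
      fix v
      have "(1/2) *\<^sub>R (v - P v) = 0" using minus[of v] E by blast
      then show "P v = v" by simp
    qed
    have "T1 (P x) = - P (T1 x)" using assms(8) by blast
    then have "P (T1 x) = - T1 (P x)" by simp
    then have "P (T1 x) = - T1 x" using allp by simp
    then have "T1 x = 0" using E by blast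
    then show False using T10 x by blast
  qed
  show ?thesis using ne1 ne2 nd1 nd2 neu1 neu2 by blast
qed

end
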